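(* Let $m$ and $n$ be positive integers. Then $$\frac{1-q}{1-q^{m+n}}{m+n-2\brack m-1}_q{n\brack m}_q{2n\brack n}_q$$ is a polynomial in $q$ with non-negative integer coefficients.
   Context: The $q$-binomial coefficients are defined by ${n\brack k}_q=\prod_{i=1}^{k}\frac{1-q^{n-k+i}}{1-q^i}$ if $0\le k\le n$, and ${n\brack k}_q=0$ otherwise. *)

theory Defs
  imports Complex_Main "HOL-Computational_Algebra.Polynomial"
begin

definition qbinom :: "nat \<Rightarrow> nat \<Rightarrow> 'a::field \<Rightarrow> 'a" where
  "qbinom n k q = (if k \<le> n then (\<Prod>i=1..k. (1 - q ^ (n - k + i)) / (1 - q ^ i)) else 0)"

end

theory Submission
  imports Defs
begin

definition NN :: "(real \<Rightarrow> real) \<Rightarrow> bool" where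
  "NN f \<longleftrightarrow> (\<exists>p::nat poly. \<forall>q. f q = poly (map_poly real p) q)"

lemma mp_add: "map_poly (of_nat::nat\<Rightarrow>real) (p + r) = map_poly of_nat p + map_poly of_nat r"
  by (rule poly_eqI) (simp add: coeff_map_poly)

lemma mp_mult: "map_poly (of_nat::nat\<Rightarrow>real) (p * r) = map_poly of_nat p * map_poly of_nat r"
  by (rule poly_eqI) (simp add: coeff_map_poly coeff_mult)

lemma NN_1: "NN (\<lambda>q. 1)"
  unfolding NN_def by (rule exI[of _ 1]) simp

lemma NN_0: "NN (\<lambda>q. 0)"
  unfolding NN_def by (rule exI[of _ 0]) simp

lemma NN_pow: "NN (\<lambda>q. q ^ k)"
  unfolding NN_def by (rule exI[of _ "monom 1 k"]) (simp add: map_poly_monom poly_monom)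

lemma NN_add: "NN f \<Longrightarrow> NN g \<Longrightarrow> NN (\<lambda>q. f q + g q)"
  unfolding NN_def by (metis mp_add poly_add)

lemma NN_mult: "NN f \<Longrightarrow> NN g \<Longrightarrow> NN (\<lambda>q. f q * g q)"
  unfolding NN_def by (metis mp_mult poly_mult)

lemma NN_sum: "finite A \<Longrightarrow> (\<And>x. x \<in> A \<Longrightarrow> NN (f x)) \<Longrightarrow> NN (\<lambda>q. \<Sum>x\<in>A. f x q)"
proof (induction A rule: finite_induct)
  case empty thus ?case by (simp add: NN_0)
next
  case (insert x F)
  thus ?case by (simp add: NN_add)
qed

fun qb :: "nat \<Rightarrow> nat \<Rightarrow> real \<Rightarrow> real" where
  "qb n 0 q = 1"
| "qb 0 (Suc k) q = 0"
| "qb (Suc n) (Suc k) q = q^(n-k) * qb n k q + qb n (Suc k) q"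

lemma qb_gt: "n < k \<Longrightarrow> qb n k q = 0"
proof (induction n arbitrary: k)
  case 0 thus ?case by (cases k) auto
next
  case (Suc n) thus ?case by (cases k) auto
qed

lemma qb_nn: "qb n n q = 1"
  by (induction n) (auto simp: qb_gt)

lemma NN_qb: "NN (qb n k)"
proof (induction n arbitrary: k)
  case 0
  show ?case
  proof (cases k)
    case 0
    have "qb 0 k = (\<lambda>q. 1)" using 0 by (intro ext) simp
    thus ?thesis by (simp add: NN_1)
  next
    case (Suc k')
    have "qb 0 k = (\<lambda>q. 0)" using Suc by (intro ext) simp
    thus ?thesis by (simp add: NN_0)
  qed
next
  case (Suc n)
  show ?case
  proof (cases k)
    case 0
    have "qb (Suc n) k = (\<lambda>q. 1)" using 0 by (intro ext) simp
    thus ?thesis by (simp add: NN_1)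
  next
    case (Suc k')
    have "qb (Suc n) k = (\<lambda>q. q^(n-k') * qb n k' q + qb n (Suc k') q)" using Suc by (intro ext) simp
    moreover have "NN (\<lambda>q. q^(n-k') * qb n k' q + qb n (Suc k') q)"
      by (intro NN_add NN_mult NN_pow Suc.IH)
    ultimately show ?thesis by simp
  qed
qed

lemma FB: "qb (a + c + 1) (c + 1) q = q^a * qb (a + c) c q + qb (a + c) (c + 1) q"
  using qb.simps(3)[of "a+c" c q] by simp

definition qbm :: "nat \<Rightarrow> nat \<Rightarrow> real \<Rightarrow> real" where
  "qbm n c q = (if c = 0 then 0 else qb n (c - 1) q)"

lemma FB2: "qb (a + c + 1) c q = q^(a+1) * qbm (a + c) c q + qb (a + c) c q"
proof (cases c)
  case 0 thus ?thesis by (simp add: qbm_def)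
next
  case (Suc c')
  thus ?thesis using FB[of "a+1" c' q] by (simp add: qbm_def)
qed

lemma L1: "(\<Sum>y=0..b. q^y * qb (y + c) c q) = qb (b + c + 1) (c + 1) q"
proof (induction b)
  case 0 thus ?case by (simp add: qb_nn)
next
  case (Suc b)
  show ?case using Suc FB[of "Suc b" c q] by simp
qed

lemma L2: "(\<Sum>y=0..b. q^y * qb (y + c) (c + 1) q) = q * qb (b + c + 1) (c + 2) q"
proof (induction b)
  case 0 thus ?case by (simp add: qb_gt)
next
  case (Suc b)
  show ?case using Suc FB[of b "c+1" q] by (simp add: algebra_simps)
qed


definition D :: "nat \<Rightarrow> nat \<Rightarrow> nat \<Rightarrow> real \<Rightarrow> real" where
  "D c a b q = qb (a + c) c q * qb (b + c) c q - q * qbm (a + c) c q * qb (b + c) (c + 1) q"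

lemma transfer: "(\<Sum>y=0..b. q^y * D c a y q) =
   qb (a + c) c q * qb (b + c + 1) (c + 1) q - q * qbm (a + c) c q * (q * qb (b + c + 1) (c + 2) q)"
proof -
  have "(\<Sum>y=0..b. q^y * D c a y q) = qb (a + c) c q * (\<Sum>y=0..b. q^y * qb (y + c) c q)
        - q * qbm (a + c) c q * (\<Sum>y=0..b. q^y * qb (y + c) (c + 1) q)"
    by (simp add: D_def sum_distrib_left sum_subtractf algebra_simps)
  thus ?thesis by (simp only: L1 L2)
qed

lemma key: "D (Suc c) (Suc a) b q - D (Suc c) a b q = q^(Suc a) * (\<Sum>y=0..b. q^y * D c (Suc a) y q)"
proof -
  have e1: "qb (Suc a + Suc c) (Suc c) q = q^(Suc a) * qb (Suc a + c) c q + qb (a + Suc c) (Suc c) q"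
    using FB[of "Suc a" c q] by (simp del: qb.simps)
  have e2: "qbm (Suc a + Suc c) (Suc c) q = q^(Suc (Suc a)) * qbm (Suc a + c) c q + qbm (a + Suc c) (Suc c) q"
    using FB2[of "Suc a" c q] by (simp add: qbm_def del: qb.simps)
  have d1: "D (Suc c) (Suc a) b q = qb (Suc a + Suc c) (Suc c) q * qb (b + c + 1) (c + 1) q
      - q * qbm (Suc a + Suc c) (Suc c) q * qb (b + c + 1) (c + 2) q"
    unfolding D_def by (simp del: qb.simps)
  have d2: "D (Suc c) a b q = qb (a + Suc c) (Suc c) q * qb (b + c + 1) (c + 1) q
      - q * qbm (a + Suc c) (Suc c) q * qb (b + c + 1) (c + 2) q"
    unfolding D_def by (simp del: qb.simps)
  show ?thesis
    unfolding transfer d1 d2 e1 e2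
    by (simp del: qb.simps add: algebra_simps)
qed

lemma diag: "D (Suc c) x (Suc x) q = D (Suc c) x x q"
proof -
  have e1: "qb (Suc x + Suc c) (Suc c) q = q^(Suc x) * qb (x + Suc c) c q + qb (x + Suc c) (Suc c) q"
    using FB[of "Suc x" c q] by (simp del: qb.simps)
  have e2: "qb (Suc x + Suc c) (Suc (Suc c)) q = q^x * qb (x + Suc c) (Suc c) q + qb (x + Suc c) (Suc (Suc c)) q"
    using FB[of x "Suc c" q] by (simp del: qb.simps)
  have d1: "D (Suc c) x (Suc x) q = qb (x + Suc c) (Suc c) q * qb (Suc x + Suc c) (Suc c) q
      - q * qb (x + Suc c) c q * qb (Suc x + Suc c) (Suc (Suc c)) q"
    unfolding D_def by (simp add: qbm_def del: qb.simps)
  have d2: "D (Suc c) x x q = qb (x + Suc c) (Suc c) q * qb (x + Suc c) (Suc c) q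
      - q * qb (x + Suc c) c q * qb (x + Suc c) (Suc (Suc c)) q"
    unfolding D_def by (simp add: qbm_def del: qb.simps)
  show ?thesis
    unfolding d1 d2 e1 e2
    by (simp del: qb.simps add: algebra_simps)
qed


fun F :: "nat \<Rightarrow> nat \<Rightarrow> nat \<Rightarrow> real \<Rightarrow> real" where
  "F 0 a b q = 1"
| "F (Suc c) a b q = (\<Sum>x=0..a. \<Sum>y=0..min x b. q^(x+y) * F c x y q)"

lemma NN_F: "NN (F c a b)"
proof (induction c arbitrary: a b)
  case 0
  have "F 0 a b = (\<lambda>q. 1)" by (intro ext) simp
  thus ?case by (simp add: NN_1)
next
  case (Suc c)
  have "F (Suc c) a b = (\<lambda>q. \<Sum>x=0..a. \<Sum>y=0..min x b. q^(x+y) * F c x y q)" by (intro ext) simp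
  moreover have "NN (\<lambda>q. \<Sum>x=0..a. \<Sum>y=0..min x b. q^(x+y) * F c x y q)"
    by (intro NN_sum finite_atLeastAtMost NN_mult NN_pow Suc.IH)
  ultimately show ?case by simp
qed

lemma S_eq: "b \<le> a \<Longrightarrow> (\<Sum>x=0..a. \<Sum>y=0..min x b. q^(x+y) * D c x y q) = D (Suc c) a b q"
proof (induction a arbitrary: b)
  case 0
  hence "b = 0" by simp
  thus ?case by (simp add: D_def qbm_def qb_nn qb_gt del: qb.simps)
next
  case (Suc a)
  have split: "(\<Sum>x=0..Suc a. \<Sum>y=0..min x b. q^(x+y) * D c x y q)
     = (\<Sum>x=0..a. \<Sum>y=0..min x (min b a). q^(x+y) * D c x y q)
       + q^(Suc a) * (\<Sum>y=0..b. q^y * D c (Suc a) y q)"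
  proof -
    have "(\<Sum>x=0..a. \<Sum>y=0..min x b. q^(x+y) * D c x y q)
        = (\<Sum>x=0..a. \<Sum>y=0..min x (min b a). q^(x+y) * D c x y q)"
      by (intro sum.cong refl) (simp add: min_def)
    moreover have "(\<Sum>y=0..min (Suc a) b. q^(Suc a + y) * D c (Suc a) y q)
        = q^(Suc a) * (\<Sum>y=0..b. q^y * D c (Suc a) y q)"
      using Suc.prems by (simp add: sum_distrib_left power_add mult_ac min_def)
    ultimately show ?thesis by (simp del: D_def)
  qed
  have IH: "(\<Sum>x=0..a. \<Sum>y=0..min x (min b a). q^(x+y) * D c x y q) = D (Suc c) a (min b a) q"
    by (rule Suc.IH) simp
  have m: "D (Suc c) a (min b a) q = D (Suc c) a b q"
  proof (cases "b \<le> a")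
    case True thus ?thesis by simp
  next
    case False
    hence "b = Suc a" using Suc.prems by simp
    thus ?thesis using diag[of c a q] by simp
  qed
  show ?case unfolding split IH m using key[of c a b q] by simp
qed

lemma F_D: "b \<le> a \<Longrightarrow> F c a b q = D c a b q"
proof (induction c arbitrary: a b)
  case 0
  thus ?case by (simp add: D_def qbm_def)
next
  case (Suc c)
  have "F (Suc c) a b q = (\<Sum>x=0..a. \<Sum>y=0..min x b. q^(x+y) * D c x y q)"
    by (auto intro!: sum.cong simp: Suc.IH)
  thus ?case using S_eq[OF Suc.prems] by simp
qed


definition qf :: "nat \<Rightarrow> real \<Rightarrow> real" where
  "qf n q = (\<Prod>i=1..n. (1 - q^i))"

lemma qf_0[simp]: "qf 0 q = 1" by (simp add: qf_def)
lemma qf_Suc: "qf (Suc n) q = qf n q * (1 - q^(Suc n))"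
  by (simp add: qf_def prod.cl_ivl_Suc)

lemma qb_qf: "k \<le> n \<Longrightarrow> qb n k q * qf k q * qf (n - k) q = qf n q"
proof (induction n arbitrary: k)
  case 0 thus ?case by simp
next
  case (Suc n)
  show ?case
  proof (cases k)
    case 0 thus ?thesis by simp
  next
    case (Suc k')
    show ?thesis
    proof (cases "k' = n")
      case True
      have "qb n n q * qf n q * qf 0 q = qf n q" using Suc.IH[of n] by simp
      thus ?thesis using True Suc by (simp add: qb_gt qf_Suc qb_nn)
    next
      case False
      hence lt: "k' < n" using Suc Suc.prems by simp
      define u where "u = n - Suc k'"
      have nk: "n - k' = Suc u" using lt u_def by simp
      have i1: "qb n k' q * qf k' q * qf (Suc u) q = qf n q" using Suc.IH[of k'] lt nk by simp
      have i2: "qb n (Suc k') q * qf (Suc k') q * qf u q = qf n q" using Suc.IH[of "Suc k'"] lt u_def by simp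
      have nn: "n = k' + Suc u" using nk lt by simp
      have "qb (Suc n) k q * qf k q * qf (Suc n - k) q
          = (q^(Suc u) * qb n k' q + qb n (Suc k') q) * (qf k' q * (1 - q^(Suc k'))) * qf (Suc u) q"
        using Suc nk by (simp add: qf_Suc)
      also have "\<dots> = q^(Suc u) * (1 - q^(Suc k')) * (qb n k' q * qf k' q * qf (Suc u) q)
          + (1 - q^(Suc u)) * (qb n (Suc k') q * (qf k' q * (1 - q^(Suc k'))) * qf u q)"
        by (simp add: qf_Suc algebra_simps)
      also have "\<dots> = q^(Suc u) * (1 - q^(Suc k')) * qf n q + (1 - q^(Suc u)) * qf n q"
        using i1 i2 by (simp add: qf_Suc)
      also have "\<dots> = qf n q * (1 - q^(Suc n))"
        using nn by (simp add: algebra_simps power_add)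
      also have "\<dots> = qf (Suc n) q" by (simp add: qf_Suc)
      finally show ?thesis .
    qed
  qed
qed

lemma qf_nz: "\<bar>q\<bar> \<noteq> 1 \<Longrightarrow> qf n q \<noteq> 0"
proof -
  assume a: "\<bar>q\<bar> \<noteq> 1"
  have "1 - q^i \<noteq> 0" if "i \<ge> 1" for i :: nat
  proof
    assume "1 - q^i = 0"
    hence "\<bar>q\<bar>^i = 1" by (metis abs_one power_abs eq_iff_diff_eq_0)
    hence "\<bar>q\<bar> = 1" using that by (metis abs_abs abs_le_self_iff linorder_le_cases order_antisym_conv
    power_decreasing power_increasing power_one_right)
    thus False using a by simp
  qed
  thus ?thesis unfolding qf_def by (simp add: prod_zero_iff)
qed

lemma qb_div: "\<bar>q\<bar> \<noteq> 1 \<Longrightarrow> k \<le> n \<Longrightarrow> qb n k q = qf n q / (qf k q * qf (n - k) q)"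
  using qb_qf[of k n q] qf_nz[of q] by (simp add: field_simps)

lemma qf_shift: "qf (j + k) q = qf j q * (\<Prod>i=1..k. (1 - q^(j+i)))"
proof (induction k)
  case 0 thus ?case by simp
next
  case (Suc k) thus ?case by (simp add: prod.cl_ivl_Suc qf_Suc)
qed

lemma qbinom_qb: "\<bar>q\<bar> \<noteq> 1 \<Longrightarrow> qbinom n k q = qb n k q"
proof (cases "k \<le> n")
  case False
  thus ?thesis by (simp add: qbinom_def qb_gt)
next
  case True
  assume a: "\<bar>q\<bar> \<noteq> 1"
  have "qf n q = qf (n - k) q * (\<Prod>i=1..k. (1 - q^(n - k + i)))"
    using qf_shift[of "n-k" k q] True by simp
  hence P: "(\<Prod>i=1..k. (1 - q^(n - k + i))) = qf n q / qf (n - k) q"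
    using qf_nz[OF a] by (simp add: field_simps)
  have "qbinom n k q = (\<Prod>i=1..k. (1 - q^(n - k + i))) / (\<Prod>i=1..k. (1 - q^i))"
    unfolding qbinom_def by (simp only: if_P[OF True] prod_dividef)
  also have "\<dots> = (qf n q / qf (n - k) q) / qf k q"
    by (simp only: P qf_def[symmetric])
  also have "\<dots> = qb n k q" using qb_div[OF a True] by simp
  finally show ?thesis .
qed


lemma gen:
  fixes q A B X Y Z W V a1 a2 b1 b2 c1 c2 :: real
  assumes nz: "X\<noteq>0" "Y\<noteq>0" "Z\<noteq>0" "W\<noteq>0" "V\<noteq>0" "a1\<noteq>0" "a2\<noteq>0" "b1\<noteq>0" "b2\<noteq>0"
    "c1\<noteq>0" "c2\<noteq>0"
  and eqs: "a1 = 1-A" "a2 = 1-q*A" "b1 = 1-B" "b2 = 1-q*B" "c1 = 1-q*A*B" "c2 = 1-q*q*A*B"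
  shows "(1-q)/c2 * (Z/((X*a1)*(Y*b1))) * ((Y*b1*b2)/((X*a1*a2)*V))
      * (W/((Y*b1*b2)*(Y*b1*b2)))
   = W/(V*(Z*c1*c2)) * ((Z/((Y*b1)*(X*a1)))*(Z/((Y*b1)*(X*a1)))
      - q*(Z/(Y*(X*a1*a2)))*(Z/((Y*b1*b2)*X)))"
proof -
  have "(1-q)/c2 * (Z/((X*a1)*(Y*b1))) * ((Y*b1*b2)/((X*a1*a2)*V))
      * (W/((Y*b1*b2)*(Y*b1*b2))) = (1-q) * Z * W / (c2 * X * X * a1 * a1 * a2 * Y * Y * b1 * b1 * b2 * V)"
    using nz by (simp add: field_simps)
  moreover have "W/(V*(Z*c1*c2)) * ((Z/((Y*b1)*(X*a1)))*(Z/((Y*b1)*(X*a1)))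
      - q*(Z/(Y*(X*a1*a2)))*(Z/((Y*b1*b2)*X)))
      = W * Z * (a2 * b2 - q * b1 * a1) / (V * c1 * c2 * Y * Y * b1 * b1 * b2 * X * X * a1 * a1 * a2)"
    using nz by (simp add: field_simps)
  moreover have "a2 * b2 - q * b1 * a1 = (1 - q) * c1"
    unfolding eqs by (simp add: algebra_simps)
  moreover have "W * Z * ((1 - q) * c1) / (V * c1 * c2 * Y * Y * b1 * b1 * b2 * X * X * a1 * a1 * a2)
      = (1-q) * Z * W / (c2 * X * X * a1 * a1 * a2 * Y * Y * b1 * b1 * b2 * V)"
    using nz by (simp add: field_simps)
  ultimately show ?thesis by metis
qed

lemma alg2:
  assumes a: "\<bar>q\<bar> \<noteq> 1"
  shows "(1-q)/(1-q^(2*i+d+4)) * qb (2*i+d+2) (i+1) q * qb (i+d+2) (i+2) q * qb (2*i+2*d+4) (i+d+2) q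
     = qb (2*i+2*d+4) d q * (qb (2*i+d+2) (i+d+1) q * qb (2*i+d+2) (i+d+1) q
        - q * qb (2*i+d+2) (i+d) q * qb (2*i+d+2) (i+d+2) q)"
proof -
  define A where "A = q^(i+1)"
  define B where "B = q^(i+d+1)"
  define X where "X = qf i q"
  define Y where "Y = qf (i+d) q"
  define Z where "Z = qf (2*i+d+2) q"
  define W where "W = qf (2*i+2*d+4) q"
  define V where "V = qf d q"
  define a1 where "a1 = 1 - A"
  define a2 where "a2 = 1 - q*A"
  define b1 where "b1 = 1 - B"
  define b2 where "b2 = 1 - q*B"
  define c1 where "c1 = 1 - q*A*B"
  define c2 where "c2 = 1 - q*q*A*B"
  have nz: "qf k q \<noteq> 0" for k using qf_nz[OF a] .
  have h1: "qb (2*i+d+2) (i+1) q = Z / (qf (i+1) q * qf (i+d+1) q)"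
    using qb_div[OF a, of "i+1" "2*i+d+2"] unfolding Z_def by (simp add: algebra_simps)
  have h2: "qb (i+d+2) (i+2) q = qf (i+d+2) q / (qf (i+2) q * V)"
    using qb_div[OF a, of "i+2" "i+d+2"] unfolding V_def by (simp add: algebra_simps)
  have h3: "qb (2*i+2*d+4) (i+d+2) q = W / (qf (i+d+2) q * qf (i+d+2) q)"
    using qb_div[OF a, of "i+d+2" "2*i+2*d+4"] unfolding W_def by (simp add: algebra_simps)
  have h4: "qb (2*i+2*d+4) d q = W / (V * qf (2*i+d+4) q)"
    using qb_div[OF a, of "d" "2*i+2*d+4"] unfolding W_def V_def by (simp add: algebra_simps)
  have h5: "qb (2*i+d+2) (i+d+1) q = Z / (qf (i+d+1) q * qf (i+1) q)"
    using qb_div[OF a, of "i+d+1" "2*i+d+2"] unfolding Z_def by (simp add: algebra_simps)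
  have h6: "qb (2*i+d+2) (i+d) q = Z / (Y * qf (i+2) q)"
    using qb_div[OF a, of "i+d" "2*i+d+2"] unfolding Z_def Y_def by (simp add: algebra_simps)
  have h7: "qb (2*i+d+2) (i+d+2) q = Z / (qf (i+d+2) q * X)"
    using qb_div[OF a, of "i+d+2" "2*i+d+2"] unfolding Z_def X_def by (simp add: algebra_simps)
  have x1: "qf (i+1) q = X*a1" unfolding X_def A_def a1_def by (simp add: qf_Suc)
  have x2: "qf (i+2) q = X*a1*a2" unfolding X_def A_def a1_def a2_def by (simp add: qf_Suc)
  have y1: "qf (i+d+1) q = Y*b1" unfolding Y_def B_def b1_def by (simp add: qf_Suc)
  have y2: "qf (i+d+2) q = Y*b1*b2" unfolding Y_def B_def b1_def b2_def by (simp add: qf_Suc)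
  have ex: "i + 1 + (i + d + 1) = 2*i+d+2" by simp
  have AB: "A*B = q^(2*i+d+2)" unfolding A_def B_def power_add[symmetric] ex ..
  have e4: "2*i+d+4 = Suc (Suc (2*i+d+2))" by simp
  have z2: "qf (2*i+d+4) q = Z*c1*c2"
    unfolding e4 qf_Suc Z_def c1_def c2_def power_Suc AB[symmetric] by (simp add: algebra_simps)
  have p: "q^(2*i+d+4) = q*q*A*B" unfolding e4 power_Suc AB[symmetric] by (simp add: algebra_simps)
  have nzs: "X\<noteq>0" "Y\<noteq>0" "Z\<noteq>0" "W\<noteq>0" "V\<noteq>0"
    unfolding X_def Y_def Z_def W_def V_def using nz by auto
  have f1: "a1 \<noteq> 0" using nz[of "i+1"] x1 by auto
  have f2: "a2 \<noteq> 0" using nz[of "i+2"] x2 by auto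
  have f3: "b1 \<noteq> 0" using nz[of "i+d+1"] y1 by auto
  have f4: "b2 \<noteq> 0" using nz[of "i+d+2"] y2 by auto
  have f5: "c1 \<noteq> 0" "c2 \<noteq> 0" using nz[of "2*i+d+4"] z2 by auto
  have c2e: "1 - q^(2*i+d+4) = c2" unfolding p c2_def ..
  show ?thesis
    unfolding h1 h2 h3 h4 h5 h6 h7 x1 x2 y1 y2 z2 c2e
    by (rule gen[OF nzs f1 f2 f3 f4 f5 a1_def a2_def b1_def b2_def c1_def c2_def])
qed

lemma alg1:
  assumes a: "\<bar>q\<bar> \<noteq> 1"
  shows "(1-q)/(1-q^(j+2)) * qb (j+1) 1 q * qb (2*j+2) (j+1) q = qb (2*j+2) j q"
proof -
  define A where "A = q^(j+1)"
  define X where "X = qf j q"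
  define W where "W = qf (2*j+2) q"
  define u where "u = 1 - q"
  define a1 where "a1 = 1 - A"
  define a2 where "a2 = 1 - q*A"
  have nz: "qf k q \<noteq> 0" for k using qf_nz[OF a] .
  have h1: "qb (j+1) 1 q = qf (j+1) q / (u * X)"
    using qb_div[OF a, of 1 "j+1"] unfolding X_def u_def by (simp add: qf_Suc)
  have h2: "qb (2*j+2) (j+1) q = W / (qf (j+1) q * qf (j+1) q)"
    using qb_div[OF a, of "j+1" "2*j+2"] unfolding W_def by (simp add: algebra_simps)
  have h3: "qb (2*j+2) j q = W / (X * qf (j+2) q)"
    using qb_div[OF a, of "j" "2*j+2"] unfolding W_def X_def by (simp add: algebra_simps)
  have x1: "qf (j+1) q = X*a1" unfolding X_def A_def a1_def by (simp add: qf_Suc)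
  have x2: "qf (j+2) q = X*a1*a2" unfolding X_def A_def a1_def a2_def by (simp add: qf_Suc)
  have p: "1 - q^(j+2) = a2" unfolding A_def a2_def by simp
  have "u \<noteq> 0" using nz[of 1] unfolding u_def by (simp add: qf_Suc)
  moreover have "X \<noteq> 0" "W \<noteq> 0" unfolding X_def W_def using nz by auto
  moreover have "a1 \<noteq> 0" using nz[of "j+1"] x1 by auto
  moreover have "a2 \<noteq> 0" using nz[of "j+2"] x2 by auto
  ultimately show ?thesis
    unfolding h1 h2 h3 x1 x2 p u_def[symmetric] by (simp add: field_simps)
qed


theorem theorem3:
  fixes m n :: nat
  assumes "m \<ge> 1" and "n \<ge> 1"
  shows "\<exists>p :: nat poly. \<forall>q :: real. \<bar>q\<bar> \<noteq> 1 \<longrightarrow>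
           (1 - q) / (1 - q ^ (m + n)) * qbinom (m + n - 2) (m - 1) q * qbinom n m q * qbinom (2 * n) n q
           = poly (map_poly real p) q"
proof (cases "m \<le> n")
  case False
  show ?thesis by (rule exI[of _ 0]) (use False in \<open>simp add: qbinom_def\<close>)
next
  case True
  have "NN (\<lambda>q. qb (2*n) (n-m) q * F (n-1) (m-1) (m-1) q)"
    by (intro NN_mult NN_qb NN_F)
  then obtain p :: "nat poly" where p: "\<And>q. qb (2*n) (n-m) q * F (n-1) (m-1) (m-1) q = poly (map_poly real p) q"
    unfolding NN_def by blast
  show ?thesis
  proof (rule exI[of _ p], intro allI impI)
    fix q :: real
    assume a: "\<bar>q\<bar> \<noteq> 1"
    have FD: "F (n-1) (m-1) (m-1) q = D (n-1) (m-1) (m-1) q" by (rule F_D) simp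
    have "(1 - q) / (1 - q ^ (m + n)) * qbinom (m + n - 2) (m - 1) q * qbinom n m q * qbinom (2 * n) n q
        = qb (2*n) (n-m) q * D (n-1) (m-1) (m-1) q"
    proof (cases "m = 1")
      case m1: True
      obtain j where nj: "n = j + 1" using assms(2) by (metis add.commute add_diff_inverse_nat less_one not_less)
      have D1: "D (n-1) (m-1) (m-1) q = 1"
        using m1 nj by (simp add: D_def qbm_def qb_nn qb_gt del: qb.simps)
      have "(1 - q) / (1 - q ^ (m + n)) * qbinom (m + n - 2) (m - 1) q * qbinom n m q * qbinom (2 * n) n q
          = (1-q)/(1-q^(j+2)) * qb (j+1) 1 q * qb (2*j+2) (j+1) q"
      proof -
        have e2: "m + n = j+2" "m + n - 2 = j" "m - 1 = 0" "2 * n = 2*j+2"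
          using m1 nj by simp_all
        have e3: "n = j + 1" "m = 1" "j + 2 - 2 = j" using m1 nj by simp_all
        have z: "qbinom j 0 q = 1" by (simp add: qbinom_def)
        show ?thesis apply (unfold e2) apply (unfold e3)
          by (simp only: qbinom_qb[OF a] z qb.simps(1) mult_1_right)
      qed
      also have "\<dots> = qb (2*j+2) j q" by (rule alg1[OF a])
      finally show ?thesis using D1 m1 nj by (simp add: algebra_simps del: qb.simps)
    next
      case False
      hence "m \<ge> 2" using assms(1) by simp
      then obtain i where mi: "m = i + 2" by (metis add.commute le_add_diff_inverse)
      obtain d where nd: "n = i + d + 2" using True mi by (metis add.assoc add.commute le_add_diff_inverse le_add2 add_le_imp_le_left le_iff_add)
      have D2: "D (n-1) (m-1) (m-1) q = qb (2*i+d+2) (i+d+1) q * qb (2*i+d+2) (i+d+1) q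
          - q * qb (2*i+d+2) (i+d) q * qb (2*i+d+2) (i+d+2) q"
      proof -
        have "D (n-1) (m-1) (m-1) q = D (i+d+1) (i+1) (i+1) q" using mi nd by simp
        also have "\<dots> = qb (2*i+d+2) (i+d+1) q * qb (2*i+d+2) (i+d+1) q
          - q * qb (2*i+d+2) (i+d) q * qb (2*i+d+2) (i+d+2) q"
        proof -
          have e: "i + 1 + (i + d + 1) = 2*i+d+2" "i + d + 1 + 1 = i + d + 2" "i + d + 1 - 1 = i + d" by simp_all
          show ?thesis unfolding D_def qbm_def e by simp
        qed
        finally show ?thesis .
      qed
      have "(1 - q) / (1 - q ^ (m + n)) * qbinom (m + n - 2) (m - 1) q * qbinom n m q * qbinom (2 * n) n q
          = (1-q)/(1-q^(2*i+d+4)) * qb (2*i+d+2) (i+1) q * qb (i+d+2) (i+2) q * qb (2*i+2*d+4) (i+d+2) q"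
      proof -
        have e2: "m + n = 2*i+d+4" "m + n - 2 = 2*i+d+2" "m - 1 = i + 1" "2 * n = 2*i+2*d+4" using mi nd by simp_all
        have e5: "2*i+d+4-2 = 2*i+d+2" by simp
        show ?thesis unfolding e2 using mi nd by (simp only: qbinom_qb[OF a] e5)
      qed
      also have "\<dots> = qb (2*i+2*d+4) d q * (qb (2*i+d+2) (i+d+1) q * qb (2*i+d+2) (i+d+1) q
        - q * qb (2*i+d+2) (i+d) q * qb (2*i+d+2) (i+d+2) q)" by (rule alg2[OF a])
      also have "\<dots> = qb (2*n) (n-m) q * D (n-1) (m-1) (m-1) q"
      proof -
        have e3: "2 * n = 2*i+2*d+4" "n - m = d" using mi nd by simp_all
        show ?thesis unfolding D2 e3 ..
      qed
      finally show ?thesis .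
    qed
    thus "(1 - q) / (1 - q ^ (m + n)) * qbinom (m + n - 2) (m - 1) q * qbinom n m q * qbinom (2 * n) n q
           = poly (map_poly real p) q" using FD p[of q] by (simp only:)
  qed
qed

end
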